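(* Let $\mathcal{D}$ be a DAG on vertex set $[p]$, let $\mathcal{V} \subseteq [p]$, and let $k \in \mathcal{V}$. If $F_{\mathcal{D}}(\mathcal{V}, k) > 0$, then $k \notin \mathrm{Maximal}(\mathcal{D}, \mathcal{V})$; equivalently, if no (proper) descendant of $k$ in $\mathcal{D}$ lies in $\mathcal{V}$, then $F_{\mathcal{D}}(\mathcal{V}, k) = 0$.
   Context: For a DAG $\mathcal{D}$ on $[p]$ and $i, j \in [p]$, $S \subseteq [p]\setminus\{i,j\}$, write $i \not\perp\!\!\!\perp_{\mathcal{D}} j \mid S$ if $i$ and $j$ are d-connected given $S$ in $\mathcal{D}$. For $\mathcal{V} \subseteq [p]$, the moral subgraph $\mathcal{M}_{\mathcal{V}}(\mathcal{D})$ is the undirected graph with vertex set $\mathcal{V}$ and edge set $\{ i - j : i \neq j \in \mathcal{V},\ i \not\perp\!\!\!\perp_{\mathcal{D}} j \mid \mathcal{V}\setminus\{i,j\}\}$. $\mathcal{G}[W]$ denotes the induced subgraph of an undirected graph $\mathcal{G}$ on $W$, and $\mathcal{V}\setminus k := \mathcal{V}\setminus\{k\}$. The fill edge set is $\mathcal{F}_{\mathcal{D}}(\mathcal{V}, k) = \mathcal{M}_{\mathcal{V}\setminus k}(\mathcal{D}) \setminus \mathcal{M}_{\mathcal{V}}(\mathcal{D})[\mathcal{V}\setminus k]$ and the fill score is $F_{\mathcal{D}}(\mathcal{V}, k) = |\mathcal{F}_{\mathcal{D}}(\mathcal{V}, k)|$. With $\mathrm{de}_{\mathcal{D}}(v)$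 the set of descendants of $v$ in $\mathcal{D}$ (nodes reachable from $v$ by a nonempty directed path, excluding $v$ itself), $\mathrm{Maximal}(\mathcal{D}, \mathcal{V}) := \{ v \in \mathcal{V} : \mathrm{de}_{\mathcal{D}}(v) \cap \mathcal{V} = \emptyset \}$. *)

theory Defs
  imports Main
begin

definition is_dag_on :: "nat \<Rightarrow> (nat \<times> nat) set \<Rightarrow> bool" where
  "is_dag_on p E \<longleftrightarrow> E \<subseteq> {1..p} \<times> {1..p} \<and> acyclic E"

definition descendants :: "(nat \<times> nat) set \<Rightarrow> nat \<Rightarrow> nat set" where
  "descendants E v = {u. (v, u) \<in> E\<^sup>+ \<and> u \<noteq> v}"

definition is_path :: "(nat \<times> nat) set \<Rightarrow> nat list \<Rightarrow> bool" where
  "is_path E xs \<longleftrightarrow> distinct xs \<and> length xs \<ge> 2 \<and>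
     (\<forall>m. Suc m < length xs \<longrightarrow> ((xs!m, xs!Suc m) \<in> E \<or> (xs!Suc m, xs!m) \<in> E))"

definition is_collider :: "(nat \<times> nat) set \<Rightarrow> nat list \<Rightarrow> nat \<Rightarrow> bool" where
  "is_collider E xs m \<longleftrightarrow> (xs!(m - 1), xs!m) \<in> E \<and> (xs!Suc m, xs!m) \<in> E"

definition active_path :: "(nat \<times> nat) set \<Rightarrow> nat set \<Rightarrow> nat list \<Rightarrow> bool" where
  "active_path E S xs \<longleftrightarrow> is_path E xs \<and>
     (\<forall>m. 0 < m \<and> Suc m < length xs \<longrightarrow>
        (if is_collider E xs m
         then xs!m \<in> S \<or> descendants E (xs!m) \<inter> S \<noteq> {}
         else xs!m \<notin> S))"

definition d_connected :: "(nat \<times> nat) set \<Rightarrow> nat \<Rightarrow> nat \<Rightarrow> nat set \<Rightarrow> bool" where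
  "d_connected E i j S \<longleftrightarrow>
     (\<exists>xs. active_path E S xs \<and> hd xs = i \<and> last xs = j)"

text \<open>Edge set of the moral subgraph M_V(D); undirected edges as 2-element sets.\<close>
definition moral_edges :: "(nat \<times> nat) set \<Rightarrow> nat set \<Rightarrow> nat set set" where
  "moral_edges E V = {{i, j} | i j. i \<in> V \<and> j \<in> V \<and> i \<noteq> j \<and> d_connected E i j (V - {i, j})}"

definition induced_edges :: "nat set set \<Rightarrow> nat set \<Rightarrow> nat set set" where
  "induced_edges G W = {e \<in> G. e \<subseteq> W}"

definition fill_edges :: "(nat \<times> nat) set \<Rightarrow> nat set \<Rightarrow> nat \<Rightarrow> nat set set" where
  "fill_edges E V k = moral_edges E (V - {k}) - induced_edges (moral_edges E V) (V - {k})"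

definition fill_score :: "(nat \<times> nat) set \<Rightarrow> nat set \<Rightarrow> nat \<Rightarrow> nat" where
  "fill_score E V k = card (fill_edges E V k)"

definition maximal_set :: "(nat \<times> nat) set \<Rightarrow> nat set \<Rightarrow> nat set" where
  "maximal_set E V = {v \<in> V. descendants E v \<inter> V = {}}"

end

theory Submission
  imports Defs
begin

lemma fwd:
  assumes ap: "active_path E S xs" and SV: "S \<subseteq> V" and lv: "last xs \<in> V"
    and dk: "descendants E (xs!m) \<inter> V = {}" and kS: "xs!m \<notin> S"
    and ml: "Suc m < length xs" and e0: "(xs!m, xs!Suc m) \<in> E"
  shows False
proof -
  have dist: "distinct xs" and pth: "\<And>n. Suc n < length xs \<Longrightarrow> (xs!n, xs!Suc n) \<in> E \<or> (xs!Suc n, xs!n) \<in> E"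
    using ap unfolding active_path_def is_path_def by auto
  have P: "n < length xs \<Longrightarrow> m < n \<Longrightarrow> (xs!m, xs!n) \<in> E\<^sup>+ \<and> (xs!(n-1), xs!n) \<in> E" for n
  proof (induction n)
    case 0 thus ?case by simp
  next
    case (Suc n)
    show ?case
    proof (cases "n = m")
      case True then show ?thesis using e0 by auto
    next
      case False
      with Suc.prems have mn: "m<n" and nl: "n < length xs" by auto
      from Suc.IH[OF nl mn] have r: "(xs!m, xs!n) \<in> E\<^sup>+" and e1: "(xs!(n-1), xs!n) \<in> E" by auto
      from pth Suc.prems have "(xs!n, xs!Suc n) \<in> E \<or> (xs!Suc n, xs!n) \<in> E" by auto
      then show ?thesis
      proof
        assume "(xs!n, xs!Suc n) \<in> E" then show ?thesis using r by auto
      next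
        assume e2: "(xs!Suc n, xs!n) \<in> E"
        have col: "is_collider E xs n" using e1 e2 unfolding is_collider_def by auto
        have neq: "xs!n \<noteq> xs!m" using dist mn nl by (simp add: nth_eq_iff_index_eq)
        from ap mn Suc.prems col have "xs!n \<in> S \<or> descendants E (xs!n) \<inter> S \<noteq> {}"
          unfolding active_path_def by auto
        then show ?thesis
        proof
          assume "xs!n \<in> S" then show ?thesis using SV dk r neq unfolding descendants_def by auto
        next
          assume "descendants E (xs!n) \<inter> S \<noteq> {}"
          then obtain u where u: "(xs!n,u)\<in>E\<^sup>+" "u\<in>S" unfolding descendants_def by auto
          then have "(xs!m,u) \<in> E\<^sup>+" using r by auto
          moreover have "u \<noteq> xs!m" using u kS by auto
          ultimately show ?thesis using SV dk u unfolding descendants_def by auto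
        qed
      qed
    qed
  qed
  have ne: "xs \<noteq> []" using ml by auto
  have lst: "last xs = xs!(length xs - 1)" using ne by (simp add: last_conv_nth)
  from P[of "length xs - 1"] ml have "(xs!m, last xs) \<in> E\<^sup>+" using lst by auto
  moreover have "last xs \<noteq> xs!m" using lst dist ml by (simp add: nth_eq_iff_index_eq)
  ultimately show False using lv dk unfolding descendants_def by auto
qed

lemma bwd:
  assumes ap: "active_path E S xs" and SV: "S \<subseteq> V" and hv: "hd xs \<in> V"
    and dk: "descendants E (xs!m) \<inter> V = {}" and kS: "xs!m \<notin> S"
    and ml: "m < length xs" and m0: "0 < m" and e0: "(xs!m, xs!(m-1)) \<in> E"
  shows False
proof -
  have dist: "distinct xs" and pth: "\<And>n. Suc n < length xs \<Longrightarrow> (xs!n, xs!Suc n) \<in> E \<or> (xs!Suc n, xs!n) \<in> E"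
    using ap unfolding active_path_def is_path_def by auto
  have P: "Suc t \<le> m \<Longrightarrow> (xs!m, xs!(m - Suc t)) \<in> E\<^sup>+ \<and> (xs!(m - t), xs!(m - Suc t)) \<in> E" for t
  proof (induction t)
    case 0 thus ?case using e0 by auto
  next
    case (Suc t)
    define d where "d = m - Suc t"
    have d0: "0 < d" and dl: "Suc d < length xs" and sd: "Suc d = m - t"
      and dm: "d - 1 = m - Suc (Suc t)" and dsuc: "Suc (d - 1) = d"
      using Suc.prems ml unfolding d_def by auto
    from Suc.IH Suc.prems have r: "(xs!m, xs!d) \<in> E\<^sup>+" and e1: "(xs!Suc d, xs!d) \<in> E"
      unfolding d_def using sd d_def by auto
    from pth[of "d-1"] dl dsuc have "(xs!(d-1), xs!d) \<in> E \<or> (xs!d, xs!(d-1)) \<in> E" by auto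
    then show ?case
    proof
      assume "(xs!d, xs!(d-1)) \<in> E" then show ?thesis using r dm sd d_def by auto
    next
      assume e2: "(xs!(d-1), xs!d) \<in> E"
      have col: "is_collider E xs d" using e1 e2 unfolding is_collider_def by auto
      have neq: "xs!d \<noteq> xs!m" using dist d0 dl ml Suc.prems unfolding d_def
        by (simp add: nth_eq_iff_index_eq)
      from ap d0 dl col have "xs!d \<in> S \<or> descendants E (xs!d) \<inter> S \<noteq> {}"
        unfolding active_path_def by auto
      then show ?thesis
      proof
        assume "xs!d \<in> S" then show ?thesis using SV dk r neq unfolding descendants_def by auto
      next
        assume "descendants E (xs!d) \<inter> S \<noteq> {}"
        then obtain u where u: "(xs!d,u)\<in>E\<^sup>+" "u\<in>S" unfolding descendants_def by auto
        then have "(xs!m,u) \<in> E\<^sup>+" using r by auto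
        moreover have "u \<noteq> xs!m" using u kS by auto
        ultimately show ?thesis using SV dk u unfolding descendants_def by auto
      qed
    qed
  qed
  have ne: "xs \<noteq> []" using ml by auto
  have h: "hd xs = xs!0" using ne by (simp add: hd_conv_nth)
  from P[of "m - 1"] m0 have "(xs!m, hd xs) \<in> E\<^sup>+" using h by auto
  moreover have "hd xs \<noteq> xs!m"
  proof -
    have "xs!0 \<noteq> xs!m" using nth_eq_iff_index_eq[OF dist, of 0 m] ml m0 by linarith
    then show ?thesis using h by simp
  qed
  ultimately show False using hv dk unfolding descendants_def by auto
qed

lemma key:
  assumes ap: "active_path E S xs" and SV: "S \<subseteq> V" and hv: "hd xs \<in> V" and lv: "last xs \<in> V"
    and dk: "descendants E k \<inter> V = {}" and kS: "k \<notin> S"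
    and ki: "k \<noteq> hd xs" and kj: "k \<noteq> last xs"
  shows "active_path E (insert k S) xs"
proof -
  have pa: "is_path E xs" using ap unfolding active_path_def by auto
  have pth: "\<And>n. Suc n < length xs \<Longrightarrow> (xs!n, xs!Suc n) \<in> E \<or> (xs!Suc n, xs!n) \<in> E"
    using pa unfolding is_path_def by auto
  have C: "(if is_collider E xs m
         then xs!m \<in> insert k S \<or> descendants E (xs!m) \<inter> insert k S \<noteq> {}
         else xs!m \<notin> insert k S)" if m: "0 < m" "Suc m < length xs" for m
  proof (cases "is_collider E xs m")
    case True then show ?thesis using ap m unfolding active_path_def by auto
  next
    case False
    have "xs!m \<noteq> k"
    proof
      assume xk: "xs!m = k"
      have "Suc (m-1) = m" using m by auto
      then have A: "(xs!(m-1), xs!m) \<in> E \<or> (xs!m, xs!(m-1)) \<in> E" using pth[of "m-1"] m by auto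
      have B: "(xs!m, xs!Suc m) \<in> E \<or> (xs!Suc m, xs!m) \<in> E" using pth m by auto
      show False
      proof (cases "(xs!m, xs!Suc m) \<in> E")
        case True
        then show False using fwd[OF ap SV lv, of m] dk kS xk m by auto
      next
        case F: False
        then have "(xs!m, xs!(m-1)) \<in> E" using A B False unfolding is_collider_def by auto
        then show False using bwd[OF ap SV hv, of m] dk kS xk m by auto
      qed
    qed
    then show ?thesis using False ap m unfolding active_path_def by auto
  qed
  show ?thesis unfolding active_path_def using pa C by blast
qed

theorem proposition3:
  fixes p :: nat and E :: "(nat \<times> nat) set" and V :: "nat set" and k :: nat
  assumes "is_dag_on p E"
    and "V \<subseteq> {1..p}"
    and "k \<in> V"
    and "fill_score E V k > 0"
  shows "k \<notin> maximal_set E V"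
proof
  assume "k \<in> maximal_set E V"
  then have dk: "descendants E k \<inter> V = {}" unfolding maximal_set_def by auto
  have "fill_edges E V k = {}"
  proof (rule ccontr)
    assume "fill_edges E V k \<noteq> {}"
    then obtain e where e1: "e \<in> moral_edges E (V - {k})"
      and e2: "e \<notin> induced_edges (moral_edges E V) (V - {k})"
      unfolding fill_edges_def by auto
    from e1 obtain i j where ij: "e = {i,j}" "i \<in> V - {k}" "j \<in> V - {k}" "i \<noteq> j"
      and dc: "d_connected E i j (V - {k} - {i, j})" unfolding moral_edges_def by auto
    from dc obtain xs where xs: "active_path E (V - {k} - {i, j}) xs" "hd xs = i" "last xs = j"
      unfolding d_connected_def by auto
    have "active_path E (insert k (V - {k} - {i, j})) xs"
      by (rule key[OF xs(1), of V]) (use xs ij dk in auto)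
    moreover have "insert k (V - {k} - {i, j}) = V - {i,j}" using ij assms(3) by auto
    ultimately have "d_connected E i j (V - {i,j})" using xs unfolding d_connected_def by auto
    then have "e \<in> moral_edges E V" using ij unfolding moral_edges_def by auto
    then have "e \<in> induced_edges (moral_edges E V) (V - {k})" using ij unfolding induced_edges_def by auto
    then show False using e2 by auto
  qed
  then show False using assms(4) unfolding fill_score_def by auto
qed

end
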